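(* The Hoffman–Singleton graph $HS$ satisfies $\alpha_{\mathrm{od}}(HS)=15$ and $\chi_{\mathrm{so}}(HS)\le20$. Moreover, $HS$ has no odd independent set with exactly $k$ vertices for any $k$ with $11\le k\le14$.
   Context: The Hoffman–Singleton graph is the (unique) $7$-regular graph on $50$ vertices with diameter $2$ and girth $5$. An odd independent set in $G=(V,E)$ is an independent set $S$ such that every $v\in V\setminus S$ has either no neighbor or an odd number of neighbors in $S$; $\alpha_{\mathrm{od}}(G)$ is its maximum size. A strong odd coloring is a proper coloring such that for each vertex $v$ every color on $N(v)$ occurs an odd number of times on $N(v)$; $\chi_{\mathrm{so}}(G)$ is the minimum number of colors. *)

theory Defs
  imports Main
begin

(* Simple graphs: finite vertex set V, symmetric irreflexive adjacency E. *)

definition nbhd :: "'a set \<Rightarrow> ('a \<Rightarrow> 'a \<Rightarrow> bool) \<Rightarrow> 'a \<Rightarrow> 'a set" where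
  "nbhd V E v = {u \<in> V. E v u}"

definition independent :: "'a set \<Rightarrow> ('a \<Rightarrow> 'a \<Rightarrow> bool) \<Rightarrow> 'a set \<Rightarrow> bool" where
  "independent V E S \<longleftrightarrow> S \<subseteq> V \<and> (\<forall>u\<in>S. \<forall>v\<in>S. \<not> E u v)"

definition odd_independent :: "'a set \<Rightarrow> ('a \<Rightarrow> 'a \<Rightarrow> bool) \<Rightarrow> 'a set \<Rightarrow> bool" where
  "odd_independent V E S \<longleftrightarrow> independent V E S \<and>
     (\<forall>v \<in> V - S. card (nbhd V E v \<inter> S) = 0 \<or> odd (card (nbhd V E v \<inter> S)))"

definition alpha_od :: "'a set \<Rightarrow> ('a \<Rightarrow> 'a \<Rightarrow> bool) \<Rightarrow> nat" where
  "alpha_od V E = Max {card S | S. odd_independent V E S}"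

definition strong_odd_coloring :: "'a set \<Rightarrow> ('a \<Rightarrow> 'a \<Rightarrow> bool) \<Rightarrow> ('a \<Rightarrow> nat) \<Rightarrow> bool" where
  "strong_odd_coloring V E c \<longleftrightarrow>
     (\<forall>u\<in>V. \<forall>v\<in>V. E u v \<longrightarrow> c u \<noteq> c v) \<and>
     (\<forall>v\<in>V. \<forall>a \<in> c ` nbhd V E v. odd (card {u \<in> nbhd V E v. c u = a}))"

definition chi_so :: "'a set \<Rightarrow> ('a \<Rightarrow> 'a \<Rightarrow> bool) \<Rightarrow> nat" where
  "chi_so V E = (LEAST k. \<exists>c. strong_odd_coloring V E c \<and> c ` V \<subseteq> {0..<k})"

(* Hoffman-Singleton graph, Robertson's construction:
   vertices (False,h,j) = vertex j of pentagon P_h, (True,i,j) = vertex j of pentagram Q_i,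
   h,i,j in Z_5. *)
definition hs_V :: "(bool \<times> nat \<times> nat) set" where
  "hs_V = UNIV \<times> {0..<5} \<times> {0..<5}"

fun hs_adj0 :: "bool \<times> nat \<times> nat \<Rightarrow> bool \<times> nat \<times> nat \<Rightarrow> bool" where
  "hs_adj0 (False, h, j) (False, h', j') \<longleftrightarrow> h = h' \<and> (j' = (j + 1) mod 5 \<or> j = (j' + 1) mod 5)"
| "hs_adj0 (True, i, j) (True, i', j') \<longleftrightarrow> i = i' \<and> (j' = (j + 2) mod 5 \<or> j = (j' + 2) mod 5)"
| "hs_adj0 (False, h, j) (True, i, k) \<longleftrightarrow> k = (h * i + j) mod 5"
| "hs_adj0 (True, i, k) (False, h, j) \<longleftrightarrow> k = (h * i + j) mod 5"

definition hs_E :: "bool \<times> nat \<times> nat \<Rightarrow> bool \<times> nat \<times> nat \<Rightarrow> bool" where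
  "hs_E u v \<longleftrightarrow> u \<in> hs_V \<and> v \<in> hs_V \<and> hs_adj0 u v"

end

theory Submission
  imports Defs
begin


lemma count_sums:
  fixes V :: "'a set" and E S
  assumes fin: "finite V"
    and deg: "\<And>u. u \<in> V \<Longrightarrow> card {v\<in>V. E v u} = 7"
    and com: "\<And>x y. x \<in> V \<Longrightarrow> y \<in> V \<Longrightarrow> x \<noteq> y \<Longrightarrow> \<not> E x y \<Longrightarrow> card {v\<in>V. E v x \<and> E v y} = 1"
    and ind: "independent V E S"
  shows "(\<Sum>v\<in>V - S. card (nbhd V E v \<inter> S)) = 7 * card S"
    and "(\<Sum>v\<in>V - S. card (nbhd V E v \<inter> S)^2) = card S * card S + 6 * card S"
proof -
  have SV: "S \<subseteq> V" and noE: "\<And>u v. u \<in> S \<Longrightarrow> v \<in> S \<Longrightarrow> \<not> E u v"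
    using ind by (auto simp: independent_def)
  have finS: "finite S" using SV fin finite_subset by blast
  define f where "f v = card (nbhd V E v \<inter> S)" for v
  have f_eq: "f v = (\<Sum>u\<in>S. if E v u then 1 else 0)" for v
  proof -
    have "nbhd V E v \<inter> S = {u\<in>S. E v u}" using SV by (auto simp: nbhd_def)
    then show ?thesis unfolding f_def using finS by (simp add: sum.If_cases Int_def conj_commute)
  qed
  have f0: "f v = 0" if "v \<in> S" for v
    unfolding f_eq using noE that by simp
  have split: "(\<Sum>v\<in>V - S. g v) = (\<Sum>v\<in>V. g v)" if "\<And>v. v \<in> S \<Longrightarrow> g v = 0" for g :: "'a \<Rightarrow> nat"
    using that fin SV by (intro sum.mono_neutral_left) auto
  have "(\<Sum>v\<in>V. f v) = (\<Sum>u\<in>S. \<Sum>v\<in>V. if E v u then 1 else 0)"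
    unfolding f_eq by (rule sum.swap)
  also have "\<dots> = (\<Sum>u\<in>S. card {v\<in>V. E v u})"
    using fin by (simp add: sum.If_cases Int_def)
  also have "\<dots> = (\<Sum>u\<in>S. 7)" using deg SV by (intro sum.cong) auto
  finally have s1: "(\<Sum>v\<in>V. f v) = 7 * card S" by simp
  show "(\<Sum>v\<in>V - S. card (nbhd V E v \<inter> S)) = 7 * card S"
    using s1 split[of f] f0 unfolding f_def by simp
  have sq: "f v ^ 2 = (\<Sum>x\<in>S. \<Sum>y\<in>S. if E v x \<and> E v y then 1 else 0)" for v
    unfolding power2_eq_square f_eq sum_product by (intro sum.cong refl) auto
  have inner: "(\<Sum>y\<in>S. card {v\<in>V. E v x \<and> E v y}) = card S + 6" if xS: "x \<in> S" for x
  proof -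
    have "(\<Sum>y\<in>S. card {v\<in>V. E v x \<and> E v y}) = card {v\<in>V. E v x \<and> E v x} + (\<Sum>y\<in>S - {x}. card {v\<in>V. E v x \<and> E v y})"
      using finS xS by (simp add: sum.remove)
    also have "\<dots> = 7 + (\<Sum>y\<in>S - {x}. 1)"
      using deg com SV noE xS by (intro arg_cong2[where f="(+)"] sum.cong) (auto, metis subsetD)
    also have "\<dots> = card S + 6" using finS xS card_gt_0_iff[of S] by auto
    finally show ?thesis .
  qed
  have "(\<Sum>v\<in>V. f v ^ 2) = (\<Sum>x\<in>S. \<Sum>v\<in>V. \<Sum>y\<in>S. if E v x \<and> E v y then 1 else 0)"
    unfolding sq by (rule sum.swap)
  also have "\<dots> = (\<Sum>x\<in>S. \<Sum>y\<in>S. \<Sum>v\<in>V. if E v x \<and> E v y then 1 else 0)"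
    by (intro sum.cong refl sum.swap)
  also have "\<dots> = (\<Sum>x\<in>S. \<Sum>y\<in>S. card {v\<in>V. E v x \<and> E v y})"
    using fin by (simp add: sum.If_cases Int_def)
  also have "\<dots> = (\<Sum>x\<in>S. card S + 6)" using inner by (intro sum.cong) auto
  finally have s2: "(\<Sum>v\<in>V. f v ^ 2) = card S * card S + 6 * card S" by (simp add: algebra_simps)
  show "(\<Sum>v\<in>V - S. card (nbhd V E v \<inter> S)^2) = card S * card S + 6 * card S"
    using s2 split[of "\<lambda>v. f v ^ 2"] f0 unfolding f_def by simp
qed


lemma int_sq_bound:
  fixes n :: nat
  shows "0 \<le> (int n - 3) * (int n - 4)"
proof (cases "n \<le> 3")
  case True then show ?thesis by (intro mult_nonpos_nonpos) auto
next
  case False then show ?thesis by (intro mult_nonneg_nonneg) auto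
qed

lemma int_odd_bound:
  fixes n :: nat
  assumes "n = 0 \<or> odd n"
  shows "0 \<le> (int n - 1) * (int n - 3)"
proof -
  have "n \<noteq> 2" using assms by auto
  then have "n = 0 \<or> n = 1 \<or> n \<ge> 3" by arith
  then show ?thesis
  proof (elim disjE)
    assume "n \<ge> 3" then show ?thesis by (intro mult_nonneg_nonneg) auto
  qed auto
qed

lemma quad_expand:
  fixes g :: "'a \<Rightarrow> nat" and A :: "'a set" and a b :: int
  shows "(\<Sum>v\<in>A. (int (g v) - a) * (int (g v) - b)) =
    int (\<Sum>v\<in>A. g v ^ 2) - (a + b) * int (\<Sum>v\<in>A. g v) + a * b * int (card A)"
proof -
  have "(\<Sum>v\<in>A. (int (g v) - a) * (int (g v) - b)) =
        (\<Sum>v\<in>A. int (g v ^ 2) - (a + b) * int (g v) + a * b)"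
    by (intro sum.cong refl) (simp add: algebra_simps power2_eq_square)
  also have "\<dots> = int (\<Sum>v\<in>A. g v ^ 2) - (a + b) * int (\<Sum>v\<in>A. g v) + a * b * int (card A)"
    by (simp add: sum.distrib sum_subtractf sum_distrib_left of_nat_sum)
  finally show ?thesis .
qed

lemma indep_bound:
  fixes V :: "'a set" and E S
  assumes fin: "finite V" and cV: "card V = 50"
    and deg: "\<And>u. u \<in> V \<Longrightarrow> card {v\<in>V. E v u} = 7"
    and com: "\<And>x y. x \<in> V \<Longrightarrow> y \<in> V \<Longrightarrow> x \<noteq> y \<Longrightarrow> \<not> E x y \<Longrightarrow> card {v\<in>V. E v x \<and> E v y} = 1"
    and ind: "independent V E S"
  shows "card S \<le> 15"
proof (rule ccontr)
  assume "\<not> card S \<le> 15"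
  have SV: "S \<subseteq> V" using ind by (auto simp: independent_def)
  have finS: "finite S" using SV fin finite_subset by blast
  obtain T where TS: "T \<subseteq> S" and cT: "card T = 16"
    using obtain_subset_with_card_n[of 16 S] \<open>\<not> card S \<le> 15\<close> by auto
  have indT: "independent V E T" using ind TS by (auto simp: independent_def)
  have TV: "T \<subseteq> V" using TS SV by auto
  note cs = count_sums[OF fin deg com indT]
  have cVT: "card (V - T) = 34" using cV cT TV fin by (simp add: card_Diff_subset finite_subset)
  have "0 \<le> (\<Sum>v\<in>V - T. (int (card (nbhd V E v \<inter> T)) - 3) * (int (card (nbhd V E v \<inter> T)) - 4))"
    by (intro sum_nonneg int_sq_bound)
  also have "\<dots> = int (card T * card T + 6 * card T) - (3 + 4) * int (7 * card T) + 3 * 4 * int (card (V - T))"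
    apply (simp only: quad_expand) using cs apply simp done
  also have "\<dots> = -24" by (simp add: cT cVT)
  finally show False by simp
qed

lemma odd_indep_bound:
  fixes V :: "'a set" and E S
  assumes fin: "finite V" and cV: "card V = 50"
    and deg: "\<And>u. u \<in> V \<Longrightarrow> card {v\<in>V. E v u} = 7"
    and com: "\<And>x y. x \<in> V \<Longrightarrow> y \<in> V \<Longrightarrow> x \<noteq> y \<Longrightarrow> \<not> E x y \<Longrightarrow> card {v\<in>V. E v x \<and> E v y} = 1"
    and oind: "odd_independent V E S"
  shows "\<not> (11 \<le> card S \<and> card S \<le> 14)"
proof
  assume rng: "11 \<le> card S \<and> card S \<le> 14"
  have ind: "independent V E S" using oind by (simp add: odd_independent_def)
  have SV: "S \<subseteq> V" using ind by (auto simp: independent_def)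
  note cs = count_sums[OF fin deg com ind]
  have cVS: "card (V - S) = 50 - card S" using cV SV fin by (simp add: card_Diff_subset finite_subset)
  have "0 \<le> (\<Sum>v\<in>V - S. (int (card (nbhd V E v \<inter> S)) - 1) * (int (card (nbhd V E v \<inter> S)) - 3))"
    using oind by (intro sum_nonneg int_odd_bound) (auto simp: odd_independent_def)
  also have "\<dots> = int (card S * card S + 6 * card S) - (1 + 3) * int (7 * card S) + 1 * 3 * int (card (V - S))"
    apply (simp only: quad_expand) using cs apply simp done
  also have "\<dots> = int (card S * card S + 6 * card S) - 4 * int (7 * card S) + 3 * int (50 - card S)"
    by (simp add: cVS)
  finally have "0 \<le> int (card S * card S + 6 * card S) - 4 * int (7 * card S) + 3 * int (50 - card S)" .
  moreover have "card S \<in> {11,12,13,14}" using rng by auto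
  ultimately show False by auto
qed

definition vs :: "(bool \<times> nat \<times> nat) list" where
 "vs = List.product [False,True] (List.product [0..<5] [0..<5])"

lemma vs_set: "hs_V = set vs"
  unfolding hs_V_def vs_def set_product by (simp add: UNIV_bool)

lemma vs_distinct: "distinct vs" by code_simp

lemma card_V: "card hs_V = 50"
proof -
  have "card hs_V = length vs" by (simp only: vs_set distinct_card[OF vs_distinct])
  also have "\<dots> = 50" by (simp add: vs_def)
  finally show ?thesis .
qed

lemma coll_V: "{v\<in>hs_V. P v} = set (filter P vs)"
  unfolding vs_set by auto

lemma card_filter_vs: "card (set (filter P vs)) = length (filter P vs)"
  by (rule distinct_card) (simp add: vs_distinct)

lemma card_coll_V: "card {v\<in>hs_V. P v} = length (filter P vs)"
  by (simp only: coll_V card_filter_vs)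

lemma nbhd_V: "v \<in> hs_V \<Longrightarrow> nbhd hs_V hs_E v = set (filter (hs_adj0 v) vs)"
  unfolding nbhd_def hs_E_def coll_V[symmetric] by auto

lemma deg_comp: "list_all (\<lambda>u. length (filter (\<lambda>v. hs_adj0 v u) vs) = 7) vs" by code_simp

lemma common_comp: "list_all (\<lambda>x. list_all (\<lambda>y. x = y \<or> hs_adj0 x y \<or>
   length (filter (\<lambda>v. hs_adj0 v x \<and> hs_adj0 v y) vs) = 1) vs) vs" by code_simp

lemma hs_deg: "u \<in> hs_V \<Longrightarrow> card {v\<in>hs_V. hs_E v u} = 7"
proof -
  assume u: "u \<in> hs_V"
  have "{v\<in>hs_V. hs_E v u} = {v\<in>hs_V. hs_adj0 v u}" using u by (auto simp: hs_E_def)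
  then have "card {v\<in>hs_V. hs_E v u} = length (filter (\<lambda>v. hs_adj0 v u) vs)"
    by (simp only: card_coll_V)
  also have "\<dots> = 7" using deg_comp u by (simp add: list_all_iff vs_set)
  finally show ?thesis .
qed

lemma hs_com: "x \<in> hs_V \<Longrightarrow> y \<in> hs_V \<Longrightarrow> x \<noteq> y \<Longrightarrow> \<not> hs_E x y \<Longrightarrow>
   card {v\<in>hs_V. hs_E v x \<and> hs_E v y} = 1"
proof -
  assume xy: "x \<in> hs_V" "y \<in> hs_V" "x \<noteq> y" "\<not> hs_E x y"
  have "{v\<in>hs_V. hs_E v x \<and> hs_E v y} = {v\<in>hs_V. hs_adj0 v x \<and> hs_adj0 v y}" using xy by (auto simp: hs_E_def)
  then have "card {v\<in>hs_V. hs_E v x \<and> hs_E v y} = length (filter (\<lambda>v. hs_adj0 v x \<and> hs_adj0 v y) vs)"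
    by (simp only: card_coll_V)
  moreover have "\<not> hs_adj0 x y" using xy by (simp add: hs_E_def)
  ultimately show ?thesis using common_comp xy by (auto simp add: list_all_iff vs_set)
qed

lemma fin_V: "finite hs_V" unfolding vs_set by simp

definition s0 :: "(bool \<times> nat \<times> nat) list" where
 "s0 = [(False, 0, 0), (False, 0, 2), (False, 1, 0), (False, 1, 2), (False, 2, 1), (False, 2, 3),
   (False, 3, 0), (False, 3, 3), (False, 4, 1), (False, 4, 3), (True, 0, 4), (True, 1, 4),
   (True, 2, 3), (True, 3, 1), (True, 4, 3)]"

lemma s0_comp: "distinct s0 \<and> list_all (\<lambda>u. u \<in> set vs) s0 \<and>
  list_all (\<lambda>u. list_all (\<lambda>v. \<not> hs_adj0 u v) s0) s0 \<and>
  list_all (\<lambda>v. v \<in> set s0 \<or> odd (length (filter (hs_adj0 v) s0))) vs"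
  by code_simp

lemma s0_odd: "odd_independent hs_V hs_E (set s0)" and s0_card: "card (set s0) = 15"
proof -
  have d: "distinct s0" and sub: "set s0 \<subseteq> hs_V"
    and ne: "\<And>u v. u \<in> set s0 \<Longrightarrow> v \<in> set s0 \<Longrightarrow> \<not> hs_adj0 u v"
    and od: "\<And>v. v \<in> set vs \<Longrightarrow> v \<in> set s0 \<or> odd (length (filter (hs_adj0 v) s0))"
    using s0_comp unfolding list_all_iff vs_set[symmetric] by auto
  show "card (set s0) = 15" using d by (simp add: distinct_card s0_def)
  have "odd (card (nbhd hs_V hs_E v \<inter> set s0))" if v: "v \<in> hs_V - set s0" for v
  proof -
    have vV: "v \<in> hs_V" using v by auto
    have "nbhd hs_V hs_E v \<inter> set s0 = set (filter (hs_adj0 v) s0)"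
      using vV sub unfolding nbhd_V[OF vV] by (auto simp: vs_set)
    moreover have "card (set (filter (hs_adj0 v) s0)) = length (filter (hs_adj0 v) s0)"
      by (rule distinct_card) (simp add: d)
    ultimately show ?thesis using od[of v] v by (simp add: vs_set)
  qed
  then show "odd_independent hs_V hs_E (set s0)"
    unfolding odd_independent_def independent_def using sub ne by (auto simp: hs_E_def)
qed

definition col_tbl :: "nat list" where
 "col_tbl = [13, 19, 6, 5, 6, 3, 8, 3, 1, 11, 14, 0, 2, 8, 4, 8, 1, 0, 16, 15, 10, 12, 15, 11, 12, 4, 3, 18, 6, 9, 19, 1, 3, 2, 18, 16, 18, 15, 12, 11, 19, 8, 8, 16, 3, 5, 5, 0, 4, 2]"

fun col :: "bool \<times> nat \<times> nat \<Rightarrow> nat" where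
 "col (b, h, j) = col_tbl ! ((if b then 25 else 0) + 5 * h + j)"

lemma col_comp: "list_all (\<lambda>v. col v < 20) vs \<and>
  list_all (\<lambda>u. list_all (\<lambda>v. hs_adj0 u v \<longrightarrow> col u \<noteq> col v) vs) vs \<and>
  list_all (\<lambda>v. list_all (\<lambda>u. odd (length (filter (\<lambda>w. col w = col u) (filter (hs_adj0 v) vs))))
     (filter (hs_adj0 v) vs)) vs"
  by code_simp

lemma col_ok: "strong_odd_coloring hs_V hs_E col \<and> col ` hs_V \<subseteq> {0..<20}"
proof -
  have r: "\<And>v. v \<in> hs_V \<Longrightarrow> col v < 20"
    and p: "\<And>u v. u \<in> hs_V \<Longrightarrow> v \<in> hs_V \<Longrightarrow> hs_adj0 u v \<Longrightarrow> col u \<noteq> col v"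
    and o: "\<And>v u. v \<in> hs_V \<Longrightarrow> u \<in> set (filter (hs_adj0 v) vs) \<Longrightarrow>
              odd (length (filter (\<lambda>w. col w = col u) (filter (hs_adj0 v) vs)))"
    using col_comp unfolding list_all_iff vs_set[symmetric] by auto
  have "odd (card {u \<in> nbhd hs_V hs_E v. col u = a})" if v: "v \<in> hs_V" and a: "a \<in> col ` nbhd hs_V hs_E v" for v a
  proof -
    obtain u where u: "u \<in> set (filter (hs_adj0 v) vs)" and au: "a = col u"
      using a unfolding nbhd_V[OF v] by auto
    have "{u \<in> nbhd hs_V hs_E v. col u = a} = set (filter (\<lambda>w. col w = col u) (filter (hs_adj0 v) vs))"
      unfolding nbhd_V[OF v] au by auto
    moreover have "card (set (filter (\<lambda>w. col w = col u) (filter (hs_adj0 v) vs))) =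
        length (filter (\<lambda>w. col w = col u) (filter (hs_adj0 v) vs))"
      by (rule distinct_card) (simp add: vs_distinct)
    ultimately show ?thesis using o[OF v u] by simp
  qed
  then show ?thesis unfolding strong_odd_coloring_def using r p by (auto simp: hs_E_def)
qed

theorem proposition9:
  shows "alpha_od hs_V hs_E = 15 \<and> chi_so hs_V hs_E \<le> 20 \<and>
         (\<forall>S. odd_independent hs_V hs_E S \<longrightarrow> \<not> (11 \<le> card S \<and> card S \<le> 14))"
proof (intro conjI allI impI)
  have le: "card S \<le> 15" if "odd_independent hs_V hs_E S" for S
    using indep_bound[of hs_V hs_E S, OF fin_V card_V hs_deg hs_com] that by (auto simp: odd_independent_def)
  have fin: "finite {card S | S. odd_independent hs_V hs_E S}"
    by (rule finite_subset[of _ "{..15}"]) (use le in auto)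
  show "alpha_od hs_V hs_E = 15"
    unfolding alpha_od_def
    by (rule Max_eqI[OF fin]) (use le s0_odd s0_card in auto)
  show "chi_so hs_V hs_E \<le> 20"
    unfolding chi_so_def by (rule Least_le) (use col_ok in blast)
  fix S assume "odd_independent hs_V hs_E S"
  then show "\<not> (11 \<le> card S \<and> card S \<le> 14)"
    using odd_indep_bound[of hs_V hs_E S, OF fin_V card_V hs_deg hs_com] by blast
qed

end
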